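(* Let $N=\{1,\ldots,n\}$ be a finite player set and let $\Gamma=(A,u)$ be a normal form game on $N$, where each $A_i\subseteq\mathbb{R}^{k_i}$ is compact, $A=A_1\times\cdots\times A_n$, and each $u_i\colon A\to\mathbb{R}$ is continuous. Suppose $\Gamma$ is separable, i.e. there are functions $h^i_j\colon A_j\to\mathbb{R}$ ($i,j\in N$) with $u_i(a)=\sum_{j\in N}h^i_j(a_j)$ for all $a\in A$ and $i\in N$, and let $B_j=\arg\max_{b_j\in A_j}h^j_j(b_j)\subseteq A_j$ be player $j$'s (constant) set of best responses. Suppose $\Gamma$ admits a socially optimal Nash equilibrium, i.e. a Nash equilibrium $a^\star\in A$ with $\sum_{i\in N}u_i(a^\star)=\bar v^\lambda(N)=\max_{a\in A}\sum_{i\in N}u_i(a)$. If for all coalitions $S\subseteq N$ and all players $j\in N$ $$\max_{a_j\in A_j}\sum_{i\in S}h^i_j(a_j)=\sum_{i\in S}\max_{a_j\in A_j}h^i_j(a_j)\quad\text{and}\quad \max_{a_j\in B_j}\sum_{i\in S}h^i_j(a_j)=\sum_{i\in S}\max_{a_j\in B_j}h^i_j(a_j),$$ then the generalised $\lambda$-Core of $\Gamma$ is non-empty: $\widehat{\mathcal{C}}^\lambda(\Gamma)\neq\varnothing$.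
   Context: Notation: for $S\subseteq N$, $A_S=\prod_{i\in S}A_i$, $A_{-S}=A_{N\setminus S}$, and a profile is written $a=(a_S,a_{-S})$. A Nash equilibrium is $a^*\in A$ with $u_i(a^* )\ge u_i(b_i,a^*_{-i})$ for all $i$ and $b_i\in A_i$. For a nonempty coalition $S\subsetneq N$ and a coalitional strategy $a_S\in A_S$, the reduced game has player set $N\setminus S$, strategy set $A_{-S}$, and payoffs $b_{-S}\mapsto u_j(a_S,b_{-S})$ for $j\in N\setminus S$; let $\mathsf{E}(S,a_S)\subseteq A_{-S}$ be its set of Nash equilibria. The generalised $\lambda$-characteristic function is $\bar v^\lambda(\varnothing)=0$, $\bar v^\lambda(N)=\max_{a\in A}\sum_{i\in N}u_i(a)$, and for $\varnothing\neq S\subsetneq N$, $$\bar v^\lambda(S)=\max_{a_S\in A_S}\ \max_{b_{-S}\in\mathsf{E}(S,a_S)}\sum_{i\in S}u_i(a_S,b_{-S}),$$ with value $-\infty$ when the relevant equilibrium set is empty. For a characteristic function $v$, its Core is $\mathcal{C}(v)=\{x\in\mathbb{R}^N:\sum_{i\in N}x_i=v(N),\ \sum_{i\in S}x_i\ge v(S)\text{ for all }S\subseteq N\}$. The generalised $\lambda$-Core of $\Gamma$ is $\widehat{\mathcal{C}}^\lambda(\Gamma)=\{a\in A: (u_1(a),\ldots,u_n(a))\in\mathcal{C}(\bar v^\lambda)\}$. *)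

theory Defs
  imports "HOL-Analysis.Analysis"
begin

text \<open>Players are natural numbers in a finite set N; a strategy profile is an
extensional function in PiE N A (product topology on nat => 'a).\<close>

definition merge_prof :: "nat set \<Rightarrow> (nat \<Rightarrow> 'a) \<Rightarrow> (nat \<Rightarrow> 'a) \<Rightarrow> (nat \<Rightarrow> 'a)" where
  "merge_prof S aS b = (\<lambda>i. if i \<in> S then aS i else b i)"

definition is_nash :: "nat set \<Rightarrow> (nat \<Rightarrow> 'a set) \<Rightarrow> (nat \<Rightarrow> (nat \<Rightarrow> 'a) \<Rightarrow> real) \<Rightarrow> (nat \<Rightarrow> 'a) \<Rightarrow> bool" where
  "is_nash N A u a \<longleftrightarrow> a \<in> (\<Pi>\<^sub>E i\<in>N. A i) \<and>
     (\<forall>i\<in>N. \<forall>b\<in>A i. u i (a(i := b)) \<le> u i a)"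

text \<open>Nash equilibria E(S, aS) of the reduced game: players N - S, payoffs
b \<mapsto> u j (aS, b).\<close>
definition reduced_eq :: "nat set \<Rightarrow> (nat \<Rightarrow> 'a set) \<Rightarrow> (nat \<Rightarrow> (nat \<Rightarrow> 'a) \<Rightarrow> real)
    \<Rightarrow> nat set \<Rightarrow> (nat \<Rightarrow> 'a) \<Rightarrow> (nat \<Rightarrow> 'a) set" where
  "reduced_eq N A u S aS = {b \<in> (\<Pi>\<^sub>E i\<in>N - S. A i).
     \<forall>j\<in>N - S. \<forall>c\<in>A j. u j ((merge_prof S aS b)(j := c)) \<le> u j (merge_prof S aS b)}"

text \<open>Generalised lambda-characteristic function, valued in extended reals
(Sup of the empty set is -\<infinity>).\<close>
definition vbar :: "nat set \<Rightarrow> (nat \<Rightarrow> 'a set) \<Rightarrow> (nat \<Rightarrow> (nat \<Rightarrow> 'a) \<Rightarrow> real) \<Rightarrow> nat set \<Rightarrow> ereal" where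
  "vbar N A u S =
    (if S = {} then 0
     else if S = N then (SUP a\<in>(\<Pi>\<^sub>E i\<in>N. A i). ereal (\<Sum>i\<in>N. u i a))
     else (SUP aS\<in>(\<Pi>\<^sub>E i\<in>S. A i). SUP b\<in>reduced_eq N A u S aS.
             ereal (\<Sum>i\<in>S. u i (merge_prof S aS b))))"

definition core :: "nat set \<Rightarrow> (nat set \<Rightarrow> ereal) \<Rightarrow> (nat \<Rightarrow> real) set" where
  "core N v = {x. ereal (\<Sum>i\<in>N. x i) = v N \<and> (\<forall>S. S \<subseteq> N \<longrightarrow> ereal (\<Sum>i\<in>S. x i) \<ge> v S)}"

definition lambda_core :: "nat set \<Rightarrow> (nat \<Rightarrow> 'a set) \<Rightarrow> (nat \<Rightarrow> (nat \<Rightarrow> 'a) \<Rightarrow> real) \<Rightarrow> (nat \<Rightarrow> 'a) set" where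
  "lambda_core N A u = {a \<in> (\<Pi>\<^sub>E i\<in>N. A i). (\<lambda>i. u i a) \<in> core N (vbar N A u)}"

end

theory Submission
  imports Defs
begin

theorem theorem1:
  fixes n :: nat
    and A :: "nat \<Rightarrow> 'a::euclidean_space set"
    and u :: "nat \<Rightarrow> (nat \<Rightarrow> 'a) \<Rightarrow> real"
    and h :: "nat \<Rightarrow> nat \<Rightarrow> 'a \<Rightarrow> real"
  defines "N \<equiv> {1..n}"
  defines "B \<equiv> (\<lambda>j. {b \<in> A j. \<forall>c\<in>A j. h j j c \<le> h j j b})"
  assumes compact: "\<forall>i\<in>N. compact (A i)"
    and cont: "\<forall>i\<in>N. continuous_on (\<Pi>\<^sub>E k\<in>N. A k) (u i)"
    and separable: "\<forall>a\<in>(\<Pi>\<^sub>E k\<in>N. A k). \<forall>i\<in>N. u i a = (\<Sum>j\<in>N. h i j (a j))"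
    and soc_opt: "\<exists>a. is_nash N A u a \<and> ereal (\<Sum>i\<in>N. u i a) = vbar N A u N"
    and cond1: "\<forall>S. S \<subseteq> N \<longrightarrow> (\<forall>j\<in>N.
        (SUP c\<in>A j. (\<Sum>i\<in>S. h i j c)) = (\<Sum>i\<in>S. SUP c\<in>A j. h i j c))"
    and cond2: "\<forall>S. S \<subseteq> N \<longrightarrow> (\<forall>j\<in>N.
        (SUP c\<in>B j. (\<Sum>i\<in>S. h i j c)) = (\<Sum>i\<in>S. SUP c\<in>B j. h i j c))"
  shows "lambda_core N A u \<noteq> {}"
proof -
  have finN: "finite N" unfolding N_def by simp
  obtain a where nash: "is_nash N A u a" and soc: "ereal (\<Sum>i\<in>N. u i a) = vbar N A u N"
    using soc_opt by blast
  have aP: "a \<in> (\<Pi>\<^sub>E k\<in>N. A k)" using nash unfolding is_nash_def by blast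
  have opt: "(\<Sum>i\<in>N. u i x) \<le> (\<Sum>i\<in>N. u i a)" if x: "x \<in> (\<Pi>\<^sub>E k\<in>N. A k)" for x
  proof (cases "N = {}")
    case True then show ?thesis by simp
  next
    case False
    have "ereal (\<Sum>i\<in>N. u i x) \<le> (SUP a\<in>(\<Pi>\<^sub>E i\<in>N. A i). ereal (\<Sum>i\<in>N. u i a))"
      using x by (rule SUP_upper)
    also have "\<dots> = ereal (\<Sum>i\<in>N. u i a)" using soc False unfolding vbar_def by simp
    finally show ?thesis by simp
  qed
  have upd: "a(j := c) \<in> (\<Pi>\<^sub>E k\<in>N. A k)" if "j \<in> N" "c \<in> A j" for j c
    using aP that by (auto simp: PiE_def extensional_def)
  have usplit: "u i (a(j:=c)) = h i j c + (\<Sum>k\<in>N-{j}. h i k (a k))"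
    if "i \<in> N" "j \<in> N" "c \<in> A j" for i j c
  proof -
    have "u i (a(j:=c)) = (\<Sum>k\<in>N. h i k ((a(j:=c)) k))"
      using separable upd[OF that(2,3)] that(1) by blast
    also have "\<dots> = h i j c + (\<Sum>k\<in>N-{j}. h i k ((a(j:=c)) k))"
      using finN that(2) by (simp add: sum.remove)
    also have "(\<Sum>k\<in>N-{j}. h i k ((a(j:=c)) k)) = (\<Sum>k\<in>N-{j}. h i k (a k))"
      by (rule sum.cong) auto
    finally show ?thesis .
  qed
  have step3: "(\<Sum>i\<in>N. h i j c) \<le> (\<Sum>i\<in>N. h i j (a j))" if "j \<in> N" "c \<in> A j" for j c
  proof -
    have ajA: "a j \<in> A j" using aP that(1) by auto
    have "(\<Sum>i\<in>N. u i (a(j:=c))) \<le> (\<Sum>i\<in>N. u i (a(j := a j)))"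
      using opt[OF upd[OF that]] by simp
    then have "(\<Sum>i\<in>N. h i j c + (\<Sum>k\<in>N-{j}. h i k (a k)))
        \<le> (\<Sum>i\<in>N. h i j (a j) + (\<Sum>k\<in>N-{j}. h i k (a k)))"
    proof -
      have e1: "(\<Sum>i\<in>N. u i (a(j:=c))) = (\<Sum>i\<in>N. h i j c + (\<Sum>k\<in>N-{j}. h i k (a k)))"
        by (rule sum.cong[OF refl]) (rule usplit[OF _ that(1) that(2)])
      have e2: "(\<Sum>i\<in>N. u i (a(j:=a j))) = (\<Sum>i\<in>N. h i j (a j) + (\<Sum>k\<in>N-{j}. h i k (a k)))"
        by (rule sum.cong[OF refl]) (rule usplit[OF _ that(1) ajA])
      show ?thesis using e1 e2 \<open>(\<Sum>i\<in>N. u i (a(j:=c))) \<le> (\<Sum>i\<in>N. u i (a(j := a j)))\<close> by linarith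
    qed
    then show ?thesis by (simp add: sum.distrib)
  qed
  have bdd: "bdd_above (h i j ` A j)" if "i \<in> N" "j \<in> N" for i j
  proof -
    define f where "f = (\<lambda>c. a(j := c))"
    have fc: "continuous_on (A j) f" unfolding f_def
      by (intro continuous_on_coordinatewise_then_product, case_tac "i = j") (simp_all add: continuous_on_id continuous_on_const)
    have fim: "f ` A j \<subseteq> (\<Pi>\<^sub>E k\<in>N. A k)" using upd[OF that(2)] unfolding f_def by auto
    have "continuous_on (A j) (u i \<circ> f)"
      using continuous_on_compose[OF fc] continuous_on_subset[OF cont[rule_format, OF that(1)] fim] by blast
    then have "compact ((u i \<circ> f) ` A j)"
      using compact that(2) compact_continuous_image by blast
    then have "bdd_above ((u i \<circ> f) ` A j)"
      by (intro bounded_imp_bdd_above compact_imp_bounded)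
    then obtain M where M: "\<And>c. c \<in> A j \<Longrightarrow> u i (f c) \<le> M"
      by (auto simp: bdd_above_def)
    show ?thesis unfolding bdd_above_def
      apply (rule exI[of _ "M - (\<Sum>k\<in>N-{j}. h i k (a k))"])
      using M usplit[OF that] unfolding f_def by fastforce
  qed
  have key: "h i j c \<le> h i j (a j)" if "i \<in> N" "j \<in> N" "c \<in> A j" for i j c
  proof -
    have ajA: "a j \<in> A j" using aP that(2) by auto
    have "(SUP c\<in>A j. (\<Sum>i\<in>N. h i j c)) = (\<Sum>i\<in>N. h i j (a j))"
      using ajA step3[OF that(2)] by (intro cSup_eq_maximum) auto
    then have eq: "(\<Sum>i\<in>N. h i j (a j)) = (\<Sum>i\<in>N. SUP c\<in>A j. h i j c)"
      using cond1 that(2) by auto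
    have ge: "\<forall>i\<in>N. h i j (a j) \<le> (SUP c\<in>A j. h i j c)"
      using cSUP_upper[OF ajA bdd[OF _ that(2)]] by blast
    have "(\<Sum>i\<in>N. (SUP c\<in>A j. h i j c) - h i j (a j)) = 0"
      using eq by (simp add: sum_subtractf)
    then have "\<forall>i\<in>N. (SUP c\<in>A j. h i j c) - h i j (a j) = 0"
    proof -
      have "\<forall>i\<in>N. 0 \<le> (SUP c\<in>A j. h i j c) - h i j (a j)" using ge by simp
      then have "(\<Sum>i\<in>N. (SUP c\<in>A j. h i j c) - h i j (a j)) = 0 \<longleftrightarrow> (\<forall>i\<in>N. (SUP c\<in>A j. h i j c) - h i j (a j) = 0)"
        by (intro sum_nonneg_eq_0_iff[OF finN]) simp
      then show ?thesis using \<open>(\<Sum>i\<in>N. (SUP c\<in>A j. h i j c) - h i j (a j)) = 0\<close>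
        by simp
    qed
    then have "(SUP c\<in>A j. h i j c) = h i j (a j)" using that(1) by auto
    moreover have "h i j c \<le> (SUP c\<in>A j. h i j c)"
      using cSUP_upper[OF that(3) bdd[OF that(1,2)]] .
    ultimately show ?thesis by simp
  qed
  have uopt: "u i x \<le> u i a" if "i \<in> N" "x \<in> (\<Pi>\<^sub>E k\<in>N. A k)" for i x
    using separable that aP by (auto intro!: sum_mono key simp: PiE_iff)
  have "a \<in> lambda_core N A u"
    unfolding lambda_core_def core_def
  proof (intro CollectI conjI aP allI impI)
    show "ereal (\<Sum>i\<in>N. u i a) = vbar N A u N" by (rule soc)
    fix S assume SN: "S \<subseteq> N"
    show "vbar N A u S \<le> ereal (\<Sum>i\<in>S. u i a)"
    proof (cases "S = {}")
      case True then show ?thesis by (simp add: vbar_def)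
    next
      case ne: False
      show ?thesis
      proof (cases "S = N")
        case True then show ?thesis using soc by simp
      next
        case False
        have "(SUP aS\<in>(\<Pi>\<^sub>E i\<in>S. A i). SUP b\<in>reduced_eq N A u S aS.
             ereal (\<Sum>i\<in>S. u i (merge_prof S aS b))) \<le> ereal (\<Sum>i\<in>S. u i a)"
        proof (intro SUP_least)
          fix aS b assume aS: "aS \<in> (\<Pi>\<^sub>E i\<in>S. A i)" and b: "b \<in> reduced_eq N A u S aS"
          have bP: "b \<in> (\<Pi>\<^sub>E i\<in>N-S. A i)" using b unfolding reduced_eq_def by blast
          have "merge_prof S aS b \<in> (\<Pi>\<^sub>E k\<in>N. A k)"
            using aS bP SN unfolding merge_prof_def by (auto simp: PiE_def extensional_def Pi_def)
          then show "ereal (\<Sum>i\<in>S. u i (merge_prof S aS b)) \<le> ereal (\<Sum>i\<in>S. u i a)"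
            using SN uopt by (auto intro!: sum_mono)
        qed
        then show ?thesis using ne False unfolding vbar_def by simp
      qed
    qed
  qed
  then show ?thesis by blast
qed

end
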